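(* (1) Soundness: if $\Phi\vdash_I\rho\sqsubseteq\tau$ holds for template types $\rho,\tau$, then $\rho\xi\sqsubseteq_J\tau\xi$ for every model $(J,\xi)$ of $\Phi$. (2) Completeness: if $\rho\xi\sqsubseteq_J\tau\xi$ holds for template types $\rho,\tau$ and a second-order substitution $\xi$, then $\Phi\vdash_I\rho\sqsubseteq\tau$ is derivable for some SOCP $\Phi$, and there exists an extension $\xi'$ of $\xi$, whose domain coincides with the second-order variables occurring in the derivation of $\Phi\vdash_I\rho\sqsubseteq\tau$, such that $(J,\xi')$ is a model of $\Phi$.
   Context: Second-order index terms $a::=i\mid\alpha\mid g(a_1,\dots,a_k)$ over index variables $i$, second-order index variables $\alpha$ and index symbols $g$ (including $0,\mathsf s,+$). An interpretation $J$ maps $k$-ary symbols to total weakly monotone functions $\mathbb N^k\to\mathbb N$ ($0,\mathsf s,+$ standard); $a\le_J b$ iff $[a]^\beta_J\le[b]^\beta_J$ for all assignments $\beta$ (for index terms without second-order variables). An SOCP is a set of inequalities $a\le b$ and occurrence constraints $i\notin\alpha$; a second-order substitution $\xi$ maps second-order variables to index terms without second-order variables; $(J,\xi)$ is a model of $\Phi$ if $a\xi\le_J b\xi$ for all inequalities and $i\notin\mathrm{Var}(\xi(\alpha))$ for all occurrence constraints. Sized types: monotypes $\rho::=B^a\mid\rho_1\times\rho_2\mid\sigma\to\rho$; polytypes $\forall\vec i.\,\sigma\to\rho$; types $\sigma::=\rho\mid$ polytype; a monotype is identified with $\forall\cdot.\rho$; types up to $\alpha$-equivalence; a template type is one whose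 indices may contain second-order variables. $\mathrm{FV}(\sigma)$ is the set of free index variables. Instantiation $\forall\vec i.\tau\sqsupseteq\rho$ iff $\rho=\tau\{\vec i:=\vec a\}$. Subtyping $\sqsubseteq_J$: $B^a\sqsubseteq_J B^b$ if $a\le_J b$; componentwise on products; $\sigma_1\to\rho_1\sqsubseteq_J\sigma_2\to\rho_2$ if $\sigma_2\sqsubseteq_J\sigma_1$ and $\rho_1\sqsubseteq_J\rho_2$; $\forall\vec i.\rho_1\sqsubseteq_J\sigma_2$ if $\sigma_2\sqsupseteq\rho_2$, $\rho_1\sqsubseteq_J\rho_2$, $\vec i\cap\mathrm{FV}(\sigma_2)=\emptyset$. Subtyping inference $\Phi\vdash_I\sigma\sqsubseteq\tau$: $\{a\le b\}\vdash_I B^a\sqsubseteq B^b$; from $\Phi_1\vdash_I\rho_1\sqsubseteq\rho_3$ and $\Phi_2\vdash_I\rho_2\sqsubseteq\rho_4$ infer $\Phi_1\cup\Phi_2\vdash_I\rho_1\times\rho_2\sqsubseteq\rho_3\times\rho_4$; from $\Phi_1\vdash_I\sigma_2\sqsubseteq\sigma_1$ and $\Phi_2\vdash_I\rho_1\sqsubseteq\rho_2$ infer $\Phi_1\cup\Phi_2\vdash_I\sigma_1\to\rho_1\sqsubseteq\sigma_2\to\rho_2$; for fresh second-order variables $\vec\alpha$, from $\Phi\vdash_I\rho_1\sqsubseteq\rho_2\{\vec j:=\vec\alpha\}$ and $\vec i\cap\mathrm{FV}(\forall\vec j.\rho_2)=\emptyset$ infer $\Phi\cup\{\vec i\notin\rho_1\}\cup\{\vec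 i\notin\rho_2\}\vdash_I\forall\vec i.\rho_1\sqsubseteq\forall\vec j.\rho_2$. Here, for index variables $\vec i$ and template types $\vec\rho$, $\vec i\notin\vec\rho$ denotes the set of occurrence constraints $i_k\notin\alpha$ for all $i_k$ in $\vec i$ and all second-order variables $\alpha$ occurring in some $\rho_l$. *)

theory Defs
  imports Main
begin

text \<open>Index variables i (free, named by nat), second-order index variables alpha (SV),
  bound index variables (de Bruijn, BV; only used for variables bound by a polytype
  quantifier, so that types are automatically identified up to alpha-equivalence),
  the standard symbols 0, s, + and further index symbols g applied to argument lists.\<close>

datatype itm = IV nat | SV nat | BV nat | Z | S itm | Pl itm itm | G string "itm list"

fun fv_i :: "itm \<Rightarrow> nat set" where
  "fv_i (IV i) = {i}"
| "fv_i (SV a) = {}"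
| "fv_i (BV n) = {}"
| "fv_i Z = {}"
| "fv_i (S a) = fv_i a"
| "fv_i (Pl a b) = fv_i a \<union> fv_i b"
| "fv_i (G g as) = (\<Union>a\<in>set as. fv_i a)"

fun sov_i :: "itm \<Rightarrow> nat set" where
  "sov_i (IV i) = {}"
| "sov_i (SV a) = {a}"
| "sov_i (BV n) = {}"
| "sov_i Z = {}"
| "sov_i (S a) = sov_i a"
| "sov_i (Pl a b) = sov_i a \<union> sov_i b"
| "sov_i (G g as) = (\<Union>a\<in>set as. sov_i a)"

fun lc_i :: "nat \<Rightarrow> itm \<Rightarrow> bool" where
  "lc_i d (BV n) = (n < d)"
| "lc_i d (S a) = lc_i d a"
| "lc_i d (Pl a b) = (lc_i d a \<and> lc_i d b)"
| "lc_i d (G g as) = (\<forall>a\<in>set as. lc_i d a)"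
| "lc_i d _ = True"

definition ground_i :: "itm \<Rightarrow> bool" where
  "ground_i a \<longleftrightarrow> sov_i a = {} \<and> lc_i 0 a"

fun opn_i :: "nat \<Rightarrow> itm list \<Rightarrow> itm \<Rightarrow> itm" where
  "opn_i d ts (BV n) =
     (if n < d then BV n
      else if n < d + length ts then ts ! (n - d)
      else BV (n - length ts))"
| "opn_i d ts (S a) = S (opn_i d ts a)"
| "opn_i d ts (Pl a b) = Pl (opn_i d ts a) (opn_i d ts b)"
| "opn_i d ts (G g as) = G g (map (opn_i d ts) as)"
| "opn_i d ts a = a"

fun subst_i :: "(nat \<rightharpoonup> itm) \<Rightarrow> itm \<Rightarrow> itm" where
  "subst_i \<xi> (SV a) = (case \<xi> a of Some t \<Rightarrow> t | None \<Rightarrow> SV a)"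
| "subst_i \<xi> (S a) = S (subst_i \<xi> a)"
| "subst_i \<xi> (Pl a b) = Pl (subst_i \<xi> a) (subst_i \<xi> b)"
| "subst_i \<xi> (G g as) = G g (map (subst_i \<xi>) as)"
| "subst_i \<xi> a = a"

definition so_subst :: "(nat \<rightharpoonup> itm) \<Rightarrow> bool" where
  "so_subst \<xi> \<longleftrightarrow> (\<forall>a t. \<xi> a = Some t \<longrightarrow> ground_i t)"

type_synonym interp = "string \<Rightarrow> nat list \<Rightarrow> nat"

text \<open>Each symbol g of arity k is interpreted by the function J g restricted to lists of
  length k; it must be weakly monotone.\<close>
definition is_interp :: "interp \<Rightarrow> bool" where
  "is_interp J \<longleftrightarrow> (\<forall>g xs ys. list_all2 (\<le>) xs ys \<longrightarrow> J g xs \<le> J g ys)"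

fun eval_i :: "interp \<Rightarrow> (nat \<Rightarrow> nat) \<Rightarrow> itm \<Rightarrow> nat" where
  "eval_i J \<beta> (IV i) = \<beta> i"
| "eval_i J \<beta> (SV a) = 0"
| "eval_i J \<beta> (BV n) = 0"
| "eval_i J \<beta> Z = 0"
| "eval_i J \<beta> (S a) = Suc (eval_i J \<beta> a)"
| "eval_i J \<beta> (Pl a b) = eval_i J \<beta> a + eval_i J \<beta> b"
| "eval_i J \<beta> (G g as) = J g (map (eval_i J \<beta>) as)"

definition le_J :: "interp \<Rightarrow> itm \<Rightarrow> itm \<Rightarrow> bool" where
  "le_J J a b \<longleftrightarrow> (\<forall>\<beta>. eval_i J \<beta> a \<le> eval_i J \<beta> b)"

text \<open>All k rho binds k index variables (de Bruijn BV 0 .. BV (k-1) in rho).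
  A monotype rho is identified with All 0 rho, i.e. well-formed types never contain All 0.\<close>
datatype ty = Base string itm | Prod ty ty | Arr ty ty | All nat ty

fun mono_wf :: "nat \<Rightarrow> ty \<Rightarrow> bool" and sig_wf :: "nat \<Rightarrow> ty \<Rightarrow> bool" where
  "mono_wf d (Base B a) = lc_i d a"
| "mono_wf d (Prod r1 r2) = (mono_wf d r1 \<and> mono_wf d r2)"
| "mono_wf d (Arr s r) = (sig_wf d s \<and> mono_wf d r)"
| "mono_wf d (All k r) = False"
| "sig_wf d (All k r) = (0 < k \<and> (\<exists>s r'. r = Arr s r') \<and> mono_wf (d + k) r)"
| "sig_wf d (Base B a) = mono_wf d (Base B a)"
| "sig_wf d (Prod r1 r2) = mono_wf d (Prod r1 r2)"
| "sig_wf d (Arr s r) = mono_wf d (Arr s r)"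

definition is_type :: "ty \<Rightarrow> bool" where
  "is_type \<sigma> \<longleftrightarrow> sig_wf 0 \<sigma>"

fun fv_t :: "ty \<Rightarrow> nat set" where
  "fv_t (Base B a) = fv_i a"
| "fv_t (Prod r1 r2) = fv_t r1 \<union> fv_t r2"
| "fv_t (Arr s r) = fv_t s \<union> fv_t r"
| "fv_t (All k r) = fv_t r"

fun sov_t :: "ty \<Rightarrow> nat set" where
  "sov_t (Base B a) = sov_i a"
| "sov_t (Prod r1 r2) = sov_t r1 \<union> sov_t r2"
| "sov_t (Arr s r) = sov_t s \<union> sov_t r"
| "sov_t (All k r) = sov_t r"

fun opn_t :: "nat \<Rightarrow> itm list \<Rightarrow> ty \<Rightarrow> ty" where
  "opn_t d ts (Base B a) = Base B (opn_i d ts a)"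
| "opn_t d ts (Prod r1 r2) = Prod (opn_t d ts r1) (opn_t d ts r2)"
| "opn_t d ts (Arr s r) = Arr (opn_t d ts s) (opn_t d ts r)"
| "opn_t d ts (All k r) = All k (opn_t (d + k) ts r)"

fun subst_t :: "(nat \<rightharpoonup> itm) \<Rightarrow> ty \<Rightarrow> ty" where
  "subst_t \<xi> (Base B a) = Base B (subst_i \<xi> a)"
| "subst_t \<xi> (Prod r1 r2) = Prod (subst_t \<xi> r1) (subst_t \<xi> r2)"
| "subst_t \<xi> (Arr s r) = Arr (subst_t \<xi> s) (subst_t \<xi> r)"
| "subst_t \<xi> (All k r) = All k (subst_t \<xi> r)"

fun nbind :: "ty \<Rightarrow> nat" where
  "nbind (All k r) = k"
| "nbind _ = 0"

fun body :: "ty \<Rightarrow> ty" where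
  "body (All k r) = r"
| "body r = r"

definition inst :: "ty \<Rightarrow> itm list \<Rightarrow> ty" where
  "inst \<sigma> bs = opn_t 0 bs (body \<sigma>)"

inductive subty :: "interp \<Rightarrow> ty \<Rightarrow> ty \<Rightarrow> bool" for J where
  sub_base: "le_J J a b \<Longrightarrow> subty J (Base B a) (Base B b)"
| sub_prod: "subty J r1 r3 \<Longrightarrow> subty J r2 r4 \<Longrightarrow> subty J (Prod r1 r2) (Prod r3 r4)"
| sub_arr: "subty J s2 s1 \<Longrightarrow> subty J r1 r2 \<Longrightarrow> subty J (Arr s1 r1) (Arr s2 r2)"
| sub_all: "\<lbrakk> distinct is; length is = nbind s1; set is \<inter> (fv_t s1 \<union> fv_t s2) = {};
             length bs = nbind s2; \<forall>b\<in>set bs. ground_i b;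
             subty J (inst s1 (map IV is)) (inst s2 bs) \<rbrakk>
           \<Longrightarrow> subty J s1 s2"

datatype constr = Ineq itm itm | NotIn nat nat  (* NotIn i alpha:  i \<notin> alpha *)

definition is_model :: "interp \<Rightarrow> (nat \<rightharpoonup> itm) \<Rightarrow> constr set \<Rightarrow> bool" where
  "is_model J \<xi> \<Phi> \<longleftrightarrow>
     (\<forall>a b. Ineq a b \<in> \<Phi> \<longrightarrow> sov_i a \<union> sov_i b \<subseteq> dom \<xi> \<and> le_J J (subst_i \<xi> a) (subst_i \<xi> b))
   \<and> (\<forall>i \<alpha>. NotIn i \<alpha> \<in> \<Phi> \<longrightarrow> \<alpha> \<in> dom \<xi> \<and> i \<notin> fv_i (the (\<xi> \<alpha>)))"

text \<open>infer Phi V s t:  Phi |-_I s <= t  is derivable by a derivation whose set of occurring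
  second-order variables is V.  Freshness of the second-order variables introduced by the
  forall rule is global: distinct subderivations share only second-order variables that
  occur in the types of both.\<close>
inductive infer :: "constr set \<Rightarrow> nat set \<Rightarrow> ty \<Rightarrow> ty \<Rightarrow> bool" where
  inf_base: "infer {Ineq a b} (sov_i a \<union> sov_i b) (Base B a) (Base B b)"
| inf_prod: "\<lbrakk> infer \<Phi>1 V1 r1 r3; infer \<Phi>2 V2 r2 r4;
              V1 \<inter> V2 \<subseteq> (sov_t r1 \<union> sov_t r3) \<inter> (sov_t r2 \<union> sov_t r4) \<rbrakk>
           \<Longrightarrow> infer (\<Phi>1 \<union> \<Phi>2) (V1 \<union> V2) (Prod r1 r2) (Prod r3 r4)"
| inf_arr: "\<lbrakk> infer \<Phi>1 V1 s2 s1; infer \<Phi>2 V2 r1 r2;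
              V1 \<inter> V2 \<subseteq> (sov_t s2 \<union> sov_t s1) \<inter> (sov_t r1 \<union> sov_t r2) \<rbrakk>
           \<Longrightarrow> infer (\<Phi>1 \<union> \<Phi>2) (V1 \<union> V2) (Arr s1 r1) (Arr s2 r2)"
| inf_all: "\<lbrakk> infer \<Phi> V (inst s1 (map IV is)) (inst s2 (map SV as));
              distinct is; length is = nbind s1; set is \<inter> (fv_t s1 \<union> fv_t s2) = {};
              distinct as; length as = nbind s2; set as \<inter> (sov_t s1 \<union> sov_t s2) = {};
              set as \<inter> V \<subseteq> sov_t (inst s2 (map SV as)) \<rbrakk>
           \<Longrightarrow> infer (\<Phi> \<union> {NotIn i \<alpha> | i \<alpha>. i \<in> set is \<and> \<alpha> \<in> sov_t s1 \<union> sov_t s2})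
                     (V \<union> set as) s1 s2"

end

theory Submission
  imports Defs
begin

lemma opn_i_lc: "lc_i k t \<Longrightarrow> k \<le> d \<Longrightarrow> opn_i d ts t = t"
  by (induction t) (auto intro: map_idI)

lemma ground_opn: "ground_i t \<Longrightarrow> opn_i d ts t = t"
  using opn_i_lc[of 0 t d ts] by (simp add: ground_i_def)

lemma subst_opn_i: "so_subst \<xi> \<Longrightarrow> subst_i \<xi> (opn_i d ts a) = opn_i d (map (subst_i \<xi>) ts) (subst_i \<xi> a)"
  by (induction a) (auto simp: so_subst_def ground_opn split: option.split)

lemma subst_opn_t: "so_subst \<xi> \<Longrightarrow> subst_t \<xi> (opn_t d ts s) = opn_t d (map (subst_i \<xi>) ts) (subst_t \<xi> s)"
  by (induction s arbitrary: d) (auto simp: subst_opn_i)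

lemma body_subst: "body (subst_t \<xi> s) = subst_t \<xi> (body s)" by (cases s) auto
lemma nbind_subst: "nbind (subst_t \<xi> s) = nbind s" by (cases s) auto

lemma inst_subst: "so_subst \<xi> \<Longrightarrow> subst_t \<xi> (inst s ts) = inst (subst_t \<xi> s) (map (subst_i \<xi>) ts)"
  by (simp add: inst_def subst_opn_t body_subst)

lemma agree_i: "(\<forall>x\<in>sov_i a. \<xi>1 x = \<xi>2 x) \<Longrightarrow> subst_i \<xi>1 a = subst_i \<xi>2 a"
  by (induction a) auto
lemma agree_t: "(\<forall>x\<in>sov_t s. \<xi>1 x = \<xi>2 x) \<Longrightarrow> subst_t \<xi>1 s = subst_t \<xi>2 s"
  by (induction s) (auto intro: agree_i)

lemma finite_sov_i: "finite (sov_i a)" by (induction a) auto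
lemma finite_sov_t: "finite (sov_t s)" by (induction s) (auto simp: finite_sov_i)

lemma fv_subst_i_up: "fv_i (subst_i \<xi> a) \<subseteq> fv_i a \<union> (\<Union>\<alpha>\<in>sov_i a \<inter> dom \<xi>. fv_i (the (\<xi> \<alpha>)))"
proof (induction a)
  case (SV x)
  then show ?case by (auto split: option.split)
next
  case (G g as)
  show ?case
  proof
    fix i assume "i \<in> fv_i (subst_i \<xi> (G g as))"
    then obtain a where a: "a \<in> set as" "i \<in> fv_i (subst_i \<xi> a)" by auto
    then show "i \<in> fv_i (G g as) \<union> (\<Union>\<alpha>\<in>sov_i (G g as) \<inter> dom \<xi>. fv_i (the (\<xi> \<alpha>)))"
      using G[OF a(1)] by auto
  qed
qed auto
lemma fv_subst_i_low1: "fv_i a \<subseteq> fv_i (subst_i \<xi> a)"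
  by (induction a) (fastforce split: option.split)+
lemma fv_subst_i_low2: "\<alpha> \<in> sov_i a \<Longrightarrow> \<xi> \<alpha> = Some t \<Longrightarrow> fv_i t \<subseteq> fv_i (subst_i \<xi> a)"
  by (induction a) (fastforce split: option.split)+

lemma fv_subst_t_up: "fv_t (subst_t \<xi> s) \<subseteq> fv_t s \<union> (\<Union>\<alpha>\<in>sov_t s \<inter> dom \<xi>. fv_i (the (\<xi> \<alpha>)))"
  apply (induction s) using fv_subst_i_up by fastforce+
lemma fv_subst_t_low1: "fv_t s \<subseteq> fv_t (subst_t \<xi> s)"
  apply (induction s) using fv_subst_i_low1 by fastforce+
lemma fv_subst_t_low2: "\<alpha> \<in> sov_t s \<Longrightarrow> \<xi> \<alpha> = Some t \<Longrightarrow> fv_i t \<subseteq> fv_t (subst_t \<xi> s)"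
  apply (induction s) using fv_subst_i_low2 by fastforce+

lemma sov_opn_i: "sov_i (opn_i d ts a) \<subseteq> sov_i a \<union> \<Union>(sov_i ` set ts)"
proof (induction a)
  case (BV n)
  show ?case
  proof (cases "n < d \<or> \<not> n < d + length ts")
    case True then show ?thesis by auto
  next
    case False
    then have "n - d < length ts" by linarith
    then have "ts ! (n-d) \<in> set ts" by (rule nth_mem)
    with False show ?thesis by auto
  qed
next
  case (G g as)
  show ?case
  proof
    fix i assume "i \<in> sov_i (opn_i d ts (G g as))"
    then obtain a where a: "a \<in> set as" "i \<in> sov_i (opn_i d ts a)" by auto
    then show "i \<in> sov_i (G g as) \<union> \<Union>(sov_i ` set ts)"
      using G[OF a(1)] by auto
  qed
qed auto
lemma sov_opn_i2: "sov_i a \<subseteq> sov_i (opn_i d ts a)"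
proof (induction a)
  case (G g as)
  show ?case
  proof
    fix i assume "i \<in> sov_i (G g as)"
    then obtain a where a: "a \<in> set as" "i \<in> sov_i a" by auto
    then show "i \<in> sov_i (opn_i d ts (G g as))"
      using G[OF a(1)] by auto
  qed
qed auto
lemma sov_opn_t: "sov_t (opn_t d ts s) \<subseteq> sov_t s \<union> \<Union>(sov_i ` set ts)"
  apply (induction s arbitrary: d) using sov_opn_i by fastforce+
lemma sov_opn_t2: "sov_t s \<subseteq> sov_t (opn_t d ts s)"
  apply (induction s arbitrary: d) using sov_opn_i2 by fastforce+
lemma sov_body: "sov_t (body s) = sov_t s" by (cases s) auto

lemma sov_inst_IV: "sov_t (inst s (map IV xs)) = sov_t s"
  using sov_opn_t[of 0 "map IV xs" "body s"] sov_opn_t2[of "body s" 0 "map IV xs"]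
  by (auto simp: inst_def sov_body)
lemma sov_inst_SV: "sov_t s \<subseteq> sov_t (inst s (map SV xs)) \<and> sov_t (inst s (map SV xs)) \<subseteq> sov_t s \<union> set xs"
  using sov_opn_t[of 0 "map SV xs" "body s"] sov_opn_t2[of "body s" 0 "map SV xs"]
  by (auto simp: inst_def sov_body)

lemma model_union: "is_model J \<xi> (A \<union> B) \<longleftrightarrow> is_model J \<xi> A \<and> is_model J \<xi> B"
  unfolding is_model_def by blast

lemma model_mono: assumes "is_model J \<xi>1 \<Phi>" "\<xi>1 \<subseteq>\<^sub>m \<xi>2" shows "is_model J \<xi>2 \<Phi>"
proof -
  have d: "dom \<xi>1 \<subseteq> dom \<xi>2" using assms(2) by (rule map_le_implies_dom_le)
  have s: "subst_i \<xi>2 a = subst_i \<xi>1 a" if "sov_i a \<subseteq> dom \<xi>1" for a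
    using that assms(2) unfolding map_le_def by (intro agree_i) (metis subsetD)
  have t: "\<xi>2 \<alpha> = \<xi>1 \<alpha>" if "\<alpha> \<in> dom \<xi>1" for \<alpha>
    using that assms(2) unfolding map_le_def by metis
  have A: "sov_i a \<union> sov_i b \<subseteq> dom \<xi>2 \<and> le_J J (subst_i \<xi>2 a) (subst_i \<xi>2 b)"
    if "Ineq a b \<in> \<Phi>" for a b
  proof -
    have h: "sov_i a \<union> sov_i b \<subseteq> dom \<xi>1" "le_J J (subst_i \<xi>1 a) (subst_i \<xi>1 b)"
      using assms(1) that unfolding is_model_def by blast+
    have "subst_i \<xi>2 a = subst_i \<xi>1 a" "subst_i \<xi>2 b = subst_i \<xi>1 b" using h(1) s by auto
    moreover have "sov_i a \<union> sov_i b \<subseteq> dom \<xi>2" using subset_trans[OF h(1) d] .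
    ultimately show ?thesis using h(2) by simp
  qed
  have B: "\<alpha> \<in> dom \<xi>2 \<and> i \<notin> fv_i (the (\<xi>2 \<alpha>))" if "NotIn i \<alpha> \<in> \<Phi>" for i \<alpha>
  proof -
    have "\<alpha> \<in> dom \<xi>1" "i \<notin> fv_i (the (\<xi>1 \<alpha>))" using assms(1) that unfolding is_model_def by blast+
    then show ?thesis using d t by auto
  qed
  show ?thesis unfolding is_model_def using A B by blast
qed

lemma infer_finite: "infer \<Phi> V \<rho> \<tau> \<Longrightarrow> finite V"
  by (induction rule: infer.induct) (auto simp: finite_sov_i)

lemma fresh_list: "finite (F::nat set) \<Longrightarrow> \<exists>xs. distinct xs \<and> length xs = n \<and> set xs \<inter> F = {}"
proof -
  assume "finite F"
  define m where "m = Suc (Max (insert 0 F))"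
  have "\<forall>x\<in>F. x < m" using \<open>finite F\<close> unfolding m_def
    by (simp add: le_imp_less_Suc)
  then show ?thesis by (intro exI[of _ "[m..<m+n]"]) auto
qed


lemma soundness:
  assumes "infer \<Phi> V \<rho> \<tau>" "so_subst \<xi>" "is_model J \<xi> \<Phi>"
  shows "subty J (subst_t \<xi> \<rho>) (subst_t \<xi> \<tau>)"
  using assms
proof (induction arbitrary: \<xi> rule: infer.induct)
  case (inf_base a b B)
  then show ?case by (auto simp: is_model_def intro: subty.sub_base)
next
  case (inf_prod \<Phi>1 V1 r1 r3 \<Phi>2 V2 r2 r4)
  then show ?case by (auto simp: model_union intro: subty.sub_prod)
next
  case (inf_arr \<Phi>1 V1 s2 s1 \<Phi>2 V2 r1 r2)
  then show ?case by (auto simp: model_union intro: subty.sub_arr)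
next
  case (inf_all \<Phi> V s1 iis s2 aas)
  define \<xi>' where "\<xi>' = ((\<lambda>_. Some Z) |` set aas) ++ \<xi>"
  have le: "\<xi> \<subseteq>\<^sub>m \<xi>'" unfolding \<xi>'_def by (rule map_le_map_add)
  have ss': "so_subst \<xi>'" using inf_all.prems(1) unfolding \<xi>'_def so_subst_def
    by (auto simp: ground_i_def restrict_map_def map_add_def split: option.splits if_splits)
  have m: "is_model J \<xi>' \<Phi>" using model_mono[OF _ le] inf_all.prems(2) model_union by blast
  have IH: "subty J (subst_t \<xi>' (inst s1 (map IV iis))) (subst_t \<xi>' (inst s2 (map SV aas)))"
    using inf_all.IH[OF ss' m] .
  have e1: "subst_t \<xi>' s1 = subst_t \<xi> s1"
    apply (rule agree_t) using inf_all.hyps(7)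
    by (auto simp: \<xi>'_def map_add_def restrict_map_def split: option.split)
  have e2: "subst_t \<xi>' s2 = subst_t \<xi> s2"
    apply (rule agree_t) using inf_all.hyps(7)
    by (auto simp: \<xi>'_def map_add_def restrict_map_def split: option.split)
  have dom': "set aas \<subseteq> dom \<xi>'" by (auto simp: \<xi>'_def)
  define bs where "bs = map (\<lambda>a. the (\<xi>' a)) aas"
  have mapSV: "map (subst_i \<xi>') (map SV aas) = bs" using dom'
    by (auto simp: bs_def split: option.split)
  have mapIV: "map (subst_i \<xi>') (map IV iis) = map IV iis" by (induction iis) auto
  have IH2: "subty J (inst (subst_t \<xi> s1) (map IV iis)) (inst (subst_t \<xi> s2) bs)"
    using IH by (simp add: inst_subst[OF ss'] e1 e2 mapSV mapIV del: map_map)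
  have gb: "\<forall>b\<in>set bs. ground_i b" using ss' dom' unfolding bs_def so_subst_def by fastforce
  have nin: "i \<notin> fv_i (the (\<xi> \<alpha>))" if "i \<in> set iis" "\<alpha> \<in> sov_t s1 \<union> sov_t s2" for i \<alpha>
    using inf_all.prems(2) that unfolding is_model_def by blast
  have fvd: "set iis \<inter> (fv_t (subst_t \<xi> s1) \<union> fv_t (subst_t \<xi> s2)) = {}"
    using fv_subst_t_up[of \<xi> s1] fv_subst_t_up[of \<xi> s2] inf_all.hyps(4) nin by blast
  show ?case
    apply (rule subty.sub_all[OF inf_all.hyps(2) _ fvd _ gb IH2])
    using inf_all.hyps by (auto simp: nbind_subst bs_def)
qed

lemma inv_Base: "subst_t \<xi> \<rho> = Base B a \<Longrightarrow> \<exists>a'. \<rho> = Base B a' \<and> subst_i \<xi> a' = a"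
  by (cases \<rho>) auto
lemma inv_Prod: "subst_t \<xi> \<rho> = Prod x y \<Longrightarrow> \<exists>x' y'. \<rho> = Prod x' y' \<and> subst_t \<xi> x' = x \<and> subst_t \<xi> y' = y"
  by (cases \<rho>) auto
lemma inv_Arr: "subst_t \<xi> \<rho> = Arr x y \<Longrightarrow> \<exists>x' y'. \<rho> = Arr x' y' \<and> subst_t \<xi> x' = x \<and> subst_t \<xi> y' = y"
  by (cases \<rho>) auto

lemma combine:
  assumes "dom \<xi> = S1 \<union> S2" "dom \<xi>1 = V1" "dom \<xi>2 = V2" "\<xi> |` S1 \<subseteq>\<^sub>m \<xi>1" "\<xi> |` S2 \<subseteq>\<^sub>m \<xi>2"
    "V1 \<inter> V2 \<subseteq> S1 \<inter> S2"
  shows "\<xi> \<subseteq>\<^sub>m \<xi>1 ++ \<xi>2" "\<xi>1 \<subseteq>\<^sub>m \<xi>1 ++ \<xi>2"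
proof -
  have a1: "\<xi>1 x = \<xi> x" if "x \<in> S1" for x
  proof -
    have "x \<in> dom (\<xi> |` S1)" using that assms(1) by auto
    then have "(\<xi> |` S1) x = \<xi>1 x" using assms(4) unfolding map_le_def by blast
    then show ?thesis using that by simp
  qed
  have a2: "\<xi>2 x = \<xi> x" if "x \<in> S2" for x
  proof -
    have "x \<in> dom (\<xi> |` S2)" using that assms(1) by auto
    then have "(\<xi> |` S2) x = \<xi>2 x" using assms(5) unfolding map_le_def by blast
    then show ?thesis using that by simp
  qed
  have v1: "x \<in> V1" if "x \<in> S1" for x
  proof -
    have "\<xi> x \<noteq> None" using that assms(1) by auto
    then show ?thesis using a1[OF that] assms(2) by auto
  qed
  have v2: "x \<in> V2" if "x \<in> S2" for x
  proof -
    have "\<xi> x \<noteq> None" using that assms(1) by auto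
    then show ?thesis using a2[OF that] assms(3) by auto
  qed
  show "\<xi> \<subseteq>\<^sub>m \<xi>1 ++ \<xi>2" unfolding map_le_def
  proof
    fix x assume x: "x \<in> dom \<xi>"
    show "\<xi> x = (\<xi>1 ++ \<xi>2) x"
    proof (cases "x \<in> V2")
      case True
      then have e: "(\<xi>1 ++ \<xi>2) x = \<xi>2 x" using assms(3) by (simp add: map_add_dom_app_simps(1))
      have "x \<in> S2"
      proof (rule ccontr)
        assume "x \<notin> S2"
        then have "x \<in> S1" using x assms(1) by auto
        then have "x \<in> V1 \<inter> V2" using v1 True by auto
        then show False using assms(6) \<open>x \<notin> S2\<close> by blast
      qed
      then show ?thesis using e a2 by simp
    next
      case False
      then have e: "(\<xi>1 ++ \<xi>2) x = \<xi>1 x" using assms(3) by (simp add: map_add_dom_app_simps(3))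
      have "x \<notin> S2" using False v2 by blast
      then have "x \<in> S1" using x assms(1) by auto
      then show ?thesis using e a1 by simp
    qed
  qed
  show "\<xi>1 \<subseteq>\<^sub>m \<xi>1 ++ \<xi>2" unfolding map_le_def
  proof
    fix x assume x: "x \<in> dom \<xi>1"
    show "\<xi>1 x = (\<xi>1 ++ \<xi>2) x"
    proof (cases "x \<in> V2")
      case True
      then have e: "(\<xi>1 ++ \<xi>2) x = \<xi>2 x" using assms(3) by (simp add: map_add_dom_app_simps(1))
      have "x \<in> S1 \<inter> S2" using assms(2,6) x True by blast
      then show ?thesis using e a1 a2 by simp
    next
      case False
      then show ?thesis using assms(3) by (simp add: map_add_dom_app_simps(3))
    qed
  qed
qed


lemma so_subst_restrict: "so_subst \<xi> \<Longrightarrow> so_subst (\<xi> |` X)"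
  unfolding so_subst_def restrict_map_def by auto
lemma so_subst_add: "so_subst \<xi>1 \<Longrightarrow> so_subst \<xi>2 \<Longrightarrow> so_subst (\<xi>1 ++ \<xi>2)"
  unfolding so_subst_def map_add_def by (auto split: option.splits)
lemma dom_restr: "X \<subseteq> dom \<xi> \<Longrightarrow> dom (\<xi> |` X) = X" by auto
lemma subst_restr: "sov_t s \<subseteq> X \<Longrightarrow> subst_t (\<xi> |` X) s = subst_t \<xi> s"
  by (rule agree_t) (auto simp: restrict_map_def)

lemma completeness:
  "subty J \<sigma>1 \<sigma>2 \<Longrightarrow> \<sigma>1 = subst_t \<xi> \<rho> \<Longrightarrow> \<sigma>2 = subst_t \<xi> \<tau> \<Longrightarrow> so_subst \<xi> \<Longrightarrow>
   dom \<xi> = sov_t \<rho> \<union> sov_t \<tau> \<Longrightarrow> finite A \<Longrightarrow>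
   \<exists>\<Phi> V \<xi>'. infer \<Phi> V \<rho> \<tau> \<and> \<xi> \<subseteq>\<^sub>m \<xi>' \<and> dom \<xi>' = V \<and> so_subst \<xi>' \<and> is_model J \<xi>' \<Phi>
      \<and> (V - (sov_t \<rho> \<union> sov_t \<tau>)) \<inter> A = {}"
proof (induction arbitrary: \<rho> \<tau> \<xi> A rule: subty.induct)
  case (sub_base a b B)
  obtain a' where a': "\<rho> = Base B a'" "subst_i \<xi> a' = a" using inv_Base sub_base.prems(1) by metis
  obtain b' where b': "\<tau> = Base B b'" "subst_i \<xi> b' = b" using inv_Base sub_base.prems(2) by metis
  have "infer {Ineq a' b'} (sov_i a' \<union> sov_i b') \<rho> \<tau>" using a' b' by (simp add: infer.inf_base)
  moreover have "is_model J \<xi> {Ineq a' b'}"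
    using sub_base a' b' by (auto simp: is_model_def)
  ultimately show ?case
    apply (intro exI[of _ "{Ineq a' b'}"] exI[of _ "sov_i a' \<union> sov_i b'"] exI[of _ \<xi>])
    using sub_base.prems a' b' by auto
next
  case (sub_prod r1 r3 r2 r4)
  obtain p1 p2 where p: "\<rho> = Prod p1 p2" "subst_t \<xi> p1 = r1" "subst_t \<xi> p2 = r2"
    using inv_Prod sub_prod.prems(1) by metis
  obtain q1 q2 where q: "\<tau> = Prod q1 q2" "subst_t \<xi> q1 = r3" "subst_t \<xi> q2 = r4"
    using inv_Prod sub_prod.prems(2) by metis
  define S1 where "S1 = sov_t p1 \<union> sov_t q1"
  define S2 where "S2 = sov_t p2 \<union> sov_t q2"
  have dS: "dom \<xi> = S1 \<union> S2" using sub_prod.prems(4) p q by (auto simp: S1_def S2_def)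
  have fS2: "finite S2" by (simp add: S2_def finite_sov_t)
  obtain \<Phi>1 V1 \<xi>1 where h1: "infer \<Phi>1 V1 p1 q1" "\<xi> |` S1 \<subseteq>\<^sub>m \<xi>1" "dom \<xi>1 = V1" "so_subst \<xi>1"
      "is_model J \<xi>1 \<Phi>1" "(V1 - S1) \<inter> (A \<union> S2) = {}"
    using sub_prod.IH(1)[of "\<xi> |` S1" p1 q1 "A \<union> S2"] p q sub_prod.prems(3,5) fS2 dS
      so_subst_restrict[of \<xi> S1] subst_restr[of p1 S1 \<xi>] subst_restr[of q1 S1 \<xi>]
    unfolding S1_def by (metis dom_restr finite_UnI sup.cobounded1 sup.cobounded2)
  have fV1: "finite V1" using h1(1) infer_finite by blast
  obtain \<Phi>2 V2 \<xi>2 where h2: "infer \<Phi>2 V2 p2 q2" "\<xi> |` S2 \<subseteq>\<^sub>m \<xi>2" "dom \<xi>2 = V2" "so_subst \<xi>2"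
      "is_model J \<xi>2 \<Phi>2" "(V2 - S2) \<inter> (A \<union> V1) = {}"
    using sub_prod.IH(2)[of "\<xi> |` S2" p2 q2 "A \<union> V1"] p q sub_prod.prems(3,5) fV1 dS
      so_subst_restrict[of \<xi> S2] subst_restr[of p2 S2 \<xi>] subst_restr[of q2 S2 \<xi>]
    unfolding S2_def by (metis dom_restr finite_UnI sup.cobounded1 sup.cobounded2)
  have s1: "S1 \<subseteq> V1" using h1(2,3) dS map_le_implies_dom_le by fastforce
  have s2: "S2 \<subseteq> V2" using h2(2,3) dS map_le_implies_dom_le by fastforce
  have V12: "V1 \<inter> V2 \<subseteq> S1 \<inter> S2" using h1(6) h2(6) s1 s2 by blast
  have inf: "infer (\<Phi>1 \<union> \<Phi>2) (V1 \<union> V2) \<rho> \<tau>"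
    using infer.inf_prod[OF h1(1) h2(1)] V12 p q unfolding S1_def S2_def by simp
  have c: "\<xi> \<subseteq>\<^sub>m \<xi>1 ++ \<xi>2" "\<xi>1 \<subseteq>\<^sub>m \<xi>1 ++ \<xi>2"
    using combine[OF dS h1(3) h2(3) h1(2) h2(2) V12] by auto
  have m: "is_model J (\<xi>1 ++ \<xi>2) (\<Phi>1 \<union> \<Phi>2)"
    using model_mono[OF h1(5) c(2)] model_mono[OF h2(5) map_le_map_add] model_union by blast
  have e: "(V1 \<union> V2 - (sov_t \<rho> \<union> sov_t \<tau>)) \<inter> A = {}"
    using h1(6) h2(6) p q unfolding S1_def S2_def by auto
  show ?case
    apply (rule exI[of _ "\<Phi>1 \<union> \<Phi>2"], rule exI[of _ "V1 \<union> V2"], rule exI[of _ "\<xi>1 ++ \<xi>2"])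
    using inf c m e h1(3,4) h2(3,4) so_subst_add by auto
next
  case (sub_arr s2 s1 r1 r2)
  obtain p1 p2 where p: "\<rho> = Arr p1 p2" "subst_t \<xi> p1 = s1" "subst_t \<xi> p2 = r1"
    using inv_Arr sub_arr.prems(1) by metis
  obtain q1 q2 where q: "\<tau> = Arr q1 q2" "subst_t \<xi> q1 = s2" "subst_t \<xi> q2 = r2"
    using inv_Arr sub_arr.prems(2) by metis
  define S1 where "S1 = sov_t q1 \<union> sov_t p1"
  define S2 where "S2 = sov_t p2 \<union> sov_t q2"
  have dS: "dom \<xi> = S1 \<union> S2" using sub_arr.prems(4) p q by (auto simp: S1_def S2_def)
  have fS2: "finite S2" by (simp add: S2_def finite_sov_t)
  obtain \<Phi>1 V1 \<xi>1 where h1: "infer \<Phi>1 V1 q1 p1" "\<xi> |` S1 \<subseteq>\<^sub>m \<xi>1" "dom \<xi>1 = V1" "so_subst \<xi>1"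
      "is_model J \<xi>1 \<Phi>1" "(V1 - S1) \<inter> (A \<union> S2) = {}"
    using sub_arr.IH(1)[of "\<xi> |` S1" q1 p1 "A \<union> S2"] p q sub_arr.prems(3,5) fS2 dS
      so_subst_restrict[of \<xi> S1] subst_restr[of p1 S1 \<xi>] subst_restr[of q1 S1 \<xi>]
    unfolding S1_def by (metis dom_restr finite_UnI sup.cobounded1 sup.cobounded2)
  have fV1: "finite V1" using h1(1) infer_finite by blast
  obtain \<Phi>2 V2 \<xi>2 where h2: "infer \<Phi>2 V2 p2 q2" "\<xi> |` S2 \<subseteq>\<^sub>m \<xi>2" "dom \<xi>2 = V2" "so_subst \<xi>2"
      "is_model J \<xi>2 \<Phi>2" "(V2 - S2) \<inter> (A \<union> V1) = {}"
    using sub_arr.IH(2)[of "\<xi> |` S2" p2 q2 "A \<union> V1"] p q sub_arr.prems(3,5) fV1 dS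
      so_subst_restrict[of \<xi> S2] subst_restr[of p2 S2 \<xi>] subst_restr[of q2 S2 \<xi>]
    unfolding S2_def by (metis dom_restr finite_UnI sup.cobounded1 sup.cobounded2)
  have s1: "S1 \<subseteq> V1" using h1(2,3) dS map_le_implies_dom_le by fastforce
  have s2: "S2 \<subseteq> V2" using h2(2,3) dS map_le_implies_dom_le by fastforce
  have V12: "V1 \<inter> V2 \<subseteq> S1 \<inter> S2" using h1(6) h2(6) s1 s2 by blast
  have inf: "infer (\<Phi>1 \<union> \<Phi>2) (V1 \<union> V2) \<rho> \<tau>"
    using infer.inf_arr[OF h1(1) h2(1)] V12 p q unfolding S1_def S2_def by simp
  have c: "\<xi> \<subseteq>\<^sub>m \<xi>1 ++ \<xi>2" "\<xi>1 \<subseteq>\<^sub>m \<xi>1 ++ \<xi>2"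
    using combine[OF dS h1(3) h2(3) h1(2) h2(2) V12] by auto
  have m: "is_model J (\<xi>1 ++ \<xi>2) (\<Phi>1 \<union> \<Phi>2)"
    using model_mono[OF h1(5) c(2)] model_mono[OF h2(5) map_le_map_add] model_union by blast
  have e: "(V1 \<union> V2 - (sov_t \<rho> \<union> sov_t \<tau>)) \<inter> A = {}"
    using h1(6) h2(6) p q unfolding S1_def S2_def by auto
  show ?case
    apply (rule exI[of _ "\<Phi>1 \<union> \<Phi>2"], rule exI[of _ "V1 \<union> V2"], rule exI[of _ "\<xi>1 ++ \<xi>2"])
    using inf c m e h1(3,4) h2(3,4) so_subst_add by auto
next
  case (sub_all iis s1 s2 bs)
  have fF: "finite (sov_t \<rho> \<union> sov_t \<tau> \<union> A)" using sub_all.prems(5) by (simp add: finite_sov_t)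
  obtain aas where aas: "distinct aas" "length aas = nbind \<tau>" "set aas \<inter> (sov_t \<rho> \<union> sov_t \<tau> \<union> A) = {}"
    using fresh_list[OF fF] by blast
  have lbs: "length bs = length aas" using sub_all.hyps(4) sub_all.prems(2) aas(2) by (simp add: nbind_subst)
  define m where "m = map_of (zip aas bs)"
  define \<xi>f where "\<xi>f = \<xi> ++ m"
  define D where "D = sov_t (inst \<rho> (map IV iis)) \<union> sov_t (inst \<tau> (map SV aas))"
  define \<xi>'' where "\<xi>'' = \<xi>f |` D"
  have domm: "dom m = set aas" using lbs by (simp add: m_def)
  have mvals: "m x = Some t \<Longrightarrow> t \<in> set bs" for x t
    unfolding m_def by (auto dest: map_of_SomeD set_zip_rightD)
  have ssf: "so_subst \<xi>f" using sub_all.prems(3) sub_all.hyps(5) mvals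
    unfolding \<xi>f_def so_subst_def map_add_def by (auto split: option.splits)
  have ss'': "so_subst \<xi>''" unfolding \<xi>''_def using ssf by (rule so_subst_restrict)
  have Dsub: "D \<subseteq> sov_t \<rho> \<union> sov_t \<tau> \<union> set aas"
    unfolding D_def using sov_inst_IV sov_inst_SV by blast
  have Dsup: "sov_t \<rho> \<union> sov_t \<tau> \<subseteq> D"
    unfolding D_def using sov_inst_IV sov_inst_SV by blast
  have domf: "dom \<xi>f = sov_t \<rho> \<union> sov_t \<tau> \<union> set aas"
    unfolding \<xi>f_def using domm sub_all.prems(4) by auto
  have dom'': "dom \<xi>'' = D" unfolding \<xi>''_def using Dsub domf by auto
  have agr: "\<xi>f x = \<xi> x" if "x \<notin> set aas" for x
    using that domm unfolding \<xi>f_def map_add_def by (auto split: option.split)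
  have le_f: "\<xi> \<subseteq>\<^sub>m \<xi>''" unfolding map_le_def
  proof
    fix x assume "x \<in> dom \<xi>"
    then have x: "x \<in> D" "x \<notin> set aas" using aas(3) sub_all.prems(4) Dsup by auto
    then show "\<xi> x = \<xi>'' x" unfolding \<xi>''_def using agr[OF x(2)] by simp
  qed
  have e\<rho>: "subst_t \<xi>f \<rho> = subst_t \<xi> \<rho>" using agr aas(3) by (intro agree_t) auto
  have e\<tau>: "subst_t \<xi>f \<tau> = subst_t \<xi> \<tau>" using agr aas(3) by (intro agree_t) auto
  have mapbs: "map (subst_i \<xi>f) (map SV aas) = bs"
  proof (rule nth_equalityI)
    show "length (map (subst_i \<xi>f) (map SV aas)) = length bs" using lbs by simp
    fix k assume "k < length (map (subst_i \<xi>f) (map SV aas))"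
    then have k: "k < length aas" by simp
    have "m (aas ! k) = Some (bs ! k)" unfolding m_def using map_of_zip_nth[OF lbs[symmetric] aas(1)] k lbs
      by simp
    then have "\<xi>f (aas ! k) = Some (bs ! k)" unfolding \<xi>f_def by simp
    then show "map (subst_i \<xi>f) (map SV aas) ! k = bs ! k" using k by simp
  qed
  have E1: "inst s1 (map IV iis) = subst_t \<xi>'' (inst \<rho> (map IV iis))"
  proof -
    have "subst_t \<xi>'' (inst \<rho> (map IV iis)) = subst_t \<xi>f (inst \<rho> (map IV iis))"
      unfolding \<xi>''_def by (rule subst_restr) (auto simp: D_def)
    also have "\<dots> = inst (subst_t \<xi> \<rho>) (map IV iis)" using inst_subst[OF ssf] e\<rho> by (simp add: comp_def)
    finally show ?thesis using sub_all.prems(1) by simp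
  qed
  have E2: "inst s2 bs = subst_t \<xi>'' (inst \<tau> (map SV aas))"
  proof -
    have "subst_t \<xi>'' (inst \<tau> (map SV aas)) = subst_t \<xi>f (inst \<tau> (map SV aas))"
      unfolding \<xi>''_def by (rule subst_restr) (auto simp: D_def)
    also have "\<dots> = inst (subst_t \<xi> \<tau>) bs" using inst_subst[OF ssf, of \<tau> "map SV aas"] e\<tau> mapbs by simp
    finally show ?thesis using sub_all.prems(2) by simp
  qed
  have fA: "finite (A \<union> set aas)" using sub_all.prems(5) by simp
  obtain \<Phi> V \<xi>' where h: "infer \<Phi> V (inst \<rho> (map IV iis)) (inst \<tau> (map SV aas))" "\<xi>'' \<subseteq>\<^sub>m \<xi>'"
     "dom \<xi>' = V" "so_subst \<xi>'" "is_model J \<xi>' \<Phi>" "(V - D) \<inter> (A \<union> set aas) = {}"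
    using sub_all.IH[OF E1 E2 ss'' _ fA] dom'' unfolding D_def by blast
  have fvr: "fv_t \<rho> \<union> fv_t \<tau> \<subseteq> fv_t s1 \<union> fv_t s2"
    using fv_subst_t_low1 sub_all.prems(1,2) by blast
  have asV: "set aas \<inter> V \<subseteq> sov_t (inst \<tau> (map SV aas))"
    using h(6) aas(3) sov_inst_IV[of \<rho> iis] unfolding D_def by blast
  have inf: "infer (\<Phi> \<union> {NotIn i \<alpha> | i \<alpha>. i \<in> set iis \<and> \<alpha> \<in> sov_t \<rho> \<union> sov_t \<tau>}) (V \<union> set aas) \<rho> \<tau>"
    apply (rule infer.inf_all[OF h(1) sub_all.hyps(1) _ _ aas(1,2) _ asV])
    using sub_all.hyps(2,3) sub_all.prems(1) fvr aas(3) by (auto simp: nbind_subst)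
  define \<xi>3 where "\<xi>3 = ((\<lambda>_. Some Z) |` set aas) ++ \<xi>'"
  have l3: "\<xi>' \<subseteq>\<^sub>m \<xi>3" unfolding \<xi>3_def by (rule map_le_map_add)
  have l\<xi>: "\<xi> \<subseteq>\<^sub>m \<xi>3" using le_f h(2) l3 map_le_trans by blast
  have d3: "dom \<xi>3 = V \<union> set aas" unfolding \<xi>3_def using h(3) by auto
  have ss3: "so_subst \<xi>3" using h(4) unfolding \<xi>3_def so_subst_def
    by (auto simp: ground_i_def restrict_map_def map_add_def split: option.splits if_splits)
  have mN: "is_model J \<xi>3 {NotIn i \<alpha> | i \<alpha>. i \<in> set iis \<and> \<alpha> \<in> sov_t \<rho> \<union> sov_t \<tau>}"
  proof -
    let ?N = "{NotIn i \<alpha> | i \<alpha>. i \<in> set iis \<and> \<alpha> \<in> sov_t \<rho> \<union> sov_t \<tau>}"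
    have B: "\<alpha> \<in> dom \<xi>3 \<and> i \<notin> fv_i (the (\<xi>3 \<alpha>))" if "NotIn i \<alpha> \<in> ?N" for i \<alpha>
    proof -
      from that have i: "i \<in> set iis" and al: "\<alpha> \<in> sov_t \<rho> \<union> sov_t \<tau>" by auto
      then obtain t where t: "\<xi> \<alpha> = Some t" using sub_all.prems(4) by auto
      have t3: "\<xi>3 \<alpha> = Some t" using l\<xi> t unfolding map_le_def by (metis domI)
      have "fv_i t \<subseteq> fv_t s1 \<union> fv_t s2"
        using al fv_subst_t_low2[of \<alpha> \<rho> \<xi> t] fv_subst_t_low2[of \<alpha> \<tau> \<xi> t] t sub_all.prems(1,2) by blast
      then have "i \<notin> fv_i t" using i sub_all.hyps(3) by blast
      then show ?thesis using t3 by auto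
    qed
    have A: "\<forall>a b. Ineq a b \<notin> ?N" by auto
    show ?thesis unfolding is_model_def using A B by blast
  qed
  have m3: "is_model J \<xi>3 (\<Phi> \<union> {NotIn i \<alpha> | i \<alpha>. i \<in> set iis \<and> \<alpha> \<in> sov_t \<rho> \<union> sov_t \<tau>})"
    using model_mono[OF h(5) l3] mN model_union by blast
  have e: "(V \<union> set aas - (sov_t \<rho> \<union> sov_t \<tau>)) \<inter> A = {}"
    using h(6) aas(3) sov_inst_IV[of \<rho> iis] sov_inst_SV[of \<tau> aas] unfolding D_def by blast
  show ?case using inf l\<xi> d3 ss3 m3 e by blast
qed

theorem mainTheorem12:
  shows "(\<forall>\<Phi> V \<rho> \<tau> J \<xi>.
            infer \<Phi> V \<rho> \<tau> \<longrightarrow> is_type \<rho> \<longrightarrow> is_type \<tau> \<longrightarrow>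
            is_interp J \<longrightarrow> so_subst \<xi> \<longrightarrow> is_model J \<xi> \<Phi> \<longrightarrow>
            subty J (subst_t \<xi> \<rho>) (subst_t \<xi> \<tau>))
       \<and> (\<forall>\<rho> \<tau> J \<xi>.
            is_type \<rho> \<longrightarrow> is_type \<tau> \<longrightarrow> is_interp J \<longrightarrow> so_subst \<xi> \<longrightarrow>
            dom \<xi> = sov_t \<rho> \<union> sov_t \<tau> \<longrightarrow>
            subty J (subst_t \<xi> \<rho>) (subst_t \<xi> \<tau>) \<longrightarrow>
            (\<exists>\<Phi> V \<xi>'. infer \<Phi> V \<rho> \<tau> \<and> \<xi> \<subseteq>\<^sub>m \<xi>' \<and> dom \<xi>' = V \<and>
                       so_subst \<xi>' \<and> is_model J \<xi>' \<Phi>))"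
proof (intro conjI allI impI)
  fix \<Phi> V \<rho> \<tau> J \<xi>
  assume "infer \<Phi> V \<rho> \<tau>" "so_subst \<xi>" "is_model J \<xi> \<Phi>"
  then show "subty J (subst_t \<xi> \<rho>) (subst_t \<xi> \<tau>)" by (rule soundness)
next
  fix \<rho> \<tau> J \<xi>
  assume "so_subst \<xi>" "dom \<xi> = sov_t \<rho> \<union> sov_t \<tau>" "subty J (subst_t \<xi> \<rho>) (subst_t \<xi> \<tau>)"
  then show "\<exists>\<Phi> V \<xi>'. infer \<Phi> V \<rho> \<tau> \<and> \<xi> \<subseteq>\<^sub>m \<xi>' \<and> dom \<xi>' = V \<and> so_subst \<xi>' \<and> is_model J \<xi>' \<Phi>"
    using completeness[of J "subst_t \<xi> \<rho>" "subst_t \<xi> \<tau>" \<xi> \<rho> \<tau> "{}"] by blast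
qed

end
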